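(* Let $n\ge 2$ be an integer and let $\boldsymbol{Z}$ be a finite E-subspace of the $n$-abomination $\mathbb{X}_n$ with an E-partition $R$ such that $\boldsymbol{Z}/R$ is $n$-colorable. Then for every $m\in\mathbb{N}$, if $c_{m,0},\dots,c_{m,2^{n+1}-1}\in Z$, there are $i<j$ such that $\langle c_{m,i},c_{m,j}\rangle\in R$.
   Context: $\mathbb{N}=\{0,1,2,\dots\}$. Fix an integer $n\ge 2$ and put $N=2^{n+1}-1$. Let $T_n$ be the set of triples $\langle k_1,k_2,k_3\rangle$ of pairwise distinct natural numbers $\le N$, with a fixed enumeration $T_n=\{s_0,\dots,s_t\}$. Let $U_n$ be a set of pairwise distinct elements $a_m,b_m$ ($m\in\mathbb{N}$) and $c_{m,k},d_{m,k},e^a_{m,k},e^b_{m,k}$ ($m\in\mathbb{N}$, $0\le k\le N$). Define $x\prec y$ on $U_n$ iff one of: (1) $x=a_m$ and $y\in\{c_{m,k_1},c_{m,k_2}\}$, where $s_j=\langle k_1,k_2,k_3\rangle$ with $j\equiv m \bmod (t+1)$; (2) $x=b_m$ and $y\in\{c_{m,k_1},c_{m,k_3}\}$, with $s_j$ as in (1); (3) $m\ge1$, $x=c_{m,k}$, and either $y=e^a_{m-1,j}$ with $j\ne k$, or $y=e^b_{m-1,i}$ for any $i\le N$; (4) $x=d_{m,k}$ and $y=c_{m,j}$ with $j\neq k$; (5) $x=e^a_{m,k}$ and either $y=a_m$ or $y=d_{m,j}$ with $j\ne k$; (6) $x=e^b_{m,k}$ and either $y=b_m$ or $y=d_{m,j}$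 with $j\ne k$. Let $\le$ be the reflexive transitive closure of $\prec$. The $n$-abomination $\mathbb{X}_n$ is the poset $U_n\cup\{\bot\}$ where $\bot$ is a new least element, with the topology in which $U$ is open iff $\bot\notin U$ or $U$ is cofinite; it is an Esakia space. An E-subspace is a closed upset with induced topology and order. An E-partition on an Esakia space $\mathbb{X}$ is an equivalence relation $R$ such that (a) if $\langle x,y\rangle\in R$ and $x\le z$ then there is $w\ge y$ with $\langle z,w\rangle\in R$; (b) if $\langle x,y\rangle\notin R$ there is a clopen union of $R$-classes containing $x$ but not $y$. The quotient $\mathbb{X}/R$ carries the quotient topology and the order $x/R\sqsubseteq y/R$ iff $x'\le y'$ for some $x'\in x/R$, $y'\in y/R$. With $\{0,1\}^n$ ordered componentwise, a weak $n$-coloring of an Esakia space is an order-preserving map into $\{0,1\}^n$ whose fibres are clopen; it is an $n$-coloring if every E-partition other than the identity relates two elements of distinct color; a space is $n$-colorable if it admits an $n$-coloring. *)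

theory Defs
  imports Main
begin

text \<open>A space is given by a carrier S, a family Op of open subsets, and an order le.\<close>

definition clopen_in :: "'a set \<Rightarrow> 'a set set \<Rightarrow> 'a set \<Rightarrow> bool" where
  "clopen_in S Op U \<longleftrightarrow> U \<subseteq> S \<and> U \<in> Op \<and> S - U \<in> Op"

definition E_partition :: "'a set \<Rightarrow> 'a set set \<Rightarrow> ('a \<Rightarrow> 'a \<Rightarrow> bool) \<Rightarrow> ('a \<times> 'a) set \<Rightarrow> bool" where
  "E_partition S Op le R \<longleftrightarrow>
     equiv S R \<and>
     (\<forall>x y z. (x, y) \<in> R \<and> z \<in> S \<and> le x z \<longrightarrow> (\<exists>w\<in>S. le y w \<and> (z, w) \<in> R)) \<and>
     (\<forall>x\<in>S. \<forall>y\<in>S. (x, y) \<notin> R \<longrightarrow>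
        (\<exists>U. clopen_in S Op U \<and> (\<forall>u\<in>U. \<forall>v. (u, v) \<in> R \<longrightarrow> v \<in> U) \<and> x \<in> U \<and> y \<notin> U))"

text \<open>Colors in {0,1}^n are represented by functions nat => bool, of which only
  the components i < n matter.\<close>

definition same_color :: "nat \<Rightarrow> (nat \<Rightarrow> bool) \<Rightarrow> (nat \<Rightarrow> bool) \<Rightarrow> bool" where
  "same_color n u v \<longleftrightarrow> (\<forall>i<n. u i = v i)"

definition weak_coloring :: "nat \<Rightarrow> 'a set \<Rightarrow> 'a set set \<Rightarrow> ('a \<Rightarrow> 'a \<Rightarrow> bool) \<Rightarrow> ('a \<Rightarrow> nat \<Rightarrow> bool) \<Rightarrow> bool" where
  "weak_coloring n S Op le f \<longleftrightarrow>
     (\<forall>x\<in>S. \<forall>y\<in>S. le x y \<longrightarrow> (\<forall>i<n. f x i \<longrightarrow> f y i)) \<and>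
     (\<forall>x\<in>S. clopen_in S Op {y\<in>S. same_color n (f y) (f x)})"

definition coloring :: "nat \<Rightarrow> 'a set \<Rightarrow> 'a set set \<Rightarrow> ('a \<Rightarrow> 'a \<Rightarrow> bool) \<Rightarrow> ('a \<Rightarrow> nat \<Rightarrow> bool) \<Rightarrow> bool" where
  "coloring n S Op le f \<longleftrightarrow>
     weak_coloring n S Op le f \<and>
     (\<forall>R. E_partition S Op le R \<and> R \<noteq> Id_on S \<longrightarrow>
        (\<exists>(x, y)\<in>R. \<not> same_color n (f x) (f y)))"

definition colorable :: "nat \<Rightarrow> 'a set \<Rightarrow> 'a set set \<Rightarrow> ('a \<Rightarrow> 'a \<Rightarrow> bool) \<Rightarrow> bool" where
  "colorable n S Op le \<longleftrightarrow> (\<exists>f. coloring n S Op le f)"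

definition E_subspace :: "'a set \<Rightarrow> 'a set set \<Rightarrow> ('a \<Rightarrow> 'a \<Rightarrow> bool) \<Rightarrow> 'a set \<Rightarrow> bool" where
  "E_subspace S Op le Z \<longleftrightarrow> Z \<subseteq> S \<and> S - Z \<in> Op \<and> (\<forall>x\<in>Z. \<forall>y\<in>S. le x y \<longrightarrow> y \<in> Z)"

definition sub_opens :: "'a set set \<Rightarrow> 'a set \<Rightarrow> 'a set set" where
  "sub_opens Op Z = {U \<inter> Z | U. U \<in> Op}"

definition quot_opens :: "'a set \<Rightarrow> 'a set set \<Rightarrow> ('a \<times> 'a) set \<Rightarrow> 'a set set set" where
  "quot_opens S Op R = {V. V \<subseteq> S // R \<and> \<Union>V \<in> Op}"

definition quot_le :: "('a \<Rightarrow> 'a \<Rightarrow> bool) \<Rightarrow> 'a set \<Rightarrow> 'a set \<Rightarrow> bool" where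
  "quot_le le P Q \<longleftrightarrow> (\<exists>x\<in>P. \<exists>y\<in>Q. le x y)"

datatype elt = Bot | A nat | B nat | C nat nat | D nat nat | Ea nat nat | Eb nat nat

definition NN :: "nat \<Rightarrow> nat" where
  "NN n = 2 ^ (n + 1) - 1"

definition triples :: "nat \<Rightarrow> (nat \<times> nat \<times> nat) set" where
  "triples n = {(k1, k2, k3). k1 \<le> NN n \<and> k2 \<le> NN n \<and> k3 \<le> NN n \<and>
                              k1 \<noteq> k2 \<and> k1 \<noteq> k3 \<and> k2 \<noteq> k3}"

definition enumeration :: "nat \<Rightarrow> (nat \<Rightarrow> nat \<times> nat \<times> nat) \<Rightarrow> bool" where
  "enumeration n s \<longleftrightarrow> bij_betw s {..<card (triples n)} (triples n)"

definition Un_set :: "nat \<Rightarrow> elt set" where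
  "Un_set n = range A \<union> range B \<union>
     (\<Union>m. \<Union>k\<in>{..NN n}. {C m k, D m k, Ea m k, Eb m k})"

definition abom_carrier :: "nat \<Rightarrow> elt set" where
  "abom_carrier n = insert Bot (Un_set n)"

definition sel :: "nat \<Rightarrow> (nat \<Rightarrow> nat \<times> nat \<times> nat) \<Rightarrow> nat \<Rightarrow> nat \<times> nat \<times> nat" where
  "sel n s m = s (m mod card (triples n))"

definition prec :: "nat \<Rightarrow> (nat \<Rightarrow> nat \<times> nat \<times> nat) \<Rightarrow> elt \<Rightarrow> elt \<Rightarrow> bool" where
  "prec n s x y \<longleftrightarrow> x \<in> Un_set n \<and> y \<in> Un_set n \<and>
    ((\<exists>m k1 k2 k3. sel n s m = (k1, k2, k3) \<and> x = A m \<and> (y = C m k1 \<or> y = C m k2)) \<or>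
     (\<exists>m k1 k2 k3. sel n s m = (k1, k2, k3) \<and> x = B m \<and> (y = C m k1 \<or> y = C m k3)) \<or>
     (\<exists>m k. m \<ge> 1 \<and> x = C m k \<and>
        ((\<exists>j. j \<noteq> k \<and> y = Ea (m - 1) j) \<or> (\<exists>i. y = Eb (m - 1) i))) \<or>
     (\<exists>m k j. x = D m k \<and> y = C m j \<and> j \<noteq> k) \<or>
     (\<exists>m k. x = Ea m k \<and> (y = A m \<or> (\<exists>j. j \<noteq> k \<and> y = D m j))) \<or>
     (\<exists>m k. x = Eb m k \<and> (y = B m \<or> (\<exists>j. j \<noteq> k \<and> y = D m j))))"

definition abom_le :: "nat \<Rightarrow> (nat \<Rightarrow> nat \<times> nat \<times> nat) \<Rightarrow> elt \<Rightarrow> elt \<Rightarrow> bool" where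
  "abom_le n s x y \<longleftrightarrow> x \<in> abom_carrier n \<and> y \<in> abom_carrier n \<and>
     (x = Bot \<or> (x, y) \<in> {(u, v). prec n s u v}\<^sup>*)"

definition abom_opens :: "nat \<Rightarrow> elt set set" where
  "abom_opens n = {U. U \<subseteq> abom_carrier n \<and> (Bot \<notin> U \<or> finite (abom_carrier n - U))}"

end

theory Submission
  imports Defs
begin


lemma card_between:
  assumes "finite AS" "V \<subseteq> AS"
  shows "card {c. V \<subseteq> c \<and> c \<subseteq> AS} = 2 ^ (card AS - card V)"
proof -
  have e: "{c. V \<subseteq> c \<and> c \<subseteq> AS} = (\<lambda>d. d \<union> V) ` Pow (AS - V)"
  proof
    show "{c. V \<subseteq> c \<and> c \<subseteq> AS} \<subseteq> (\<lambda>d. d \<union> V) ` Pow (AS - V)"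
    proof
      fix c assume "c \<in> {c. V \<subseteq> c \<and> c \<subseteq> AS}"
      then have "c = (c - V) \<union> V" "c - V \<in> Pow (AS - V)" by auto
      then show "c \<in> (\<lambda>d. d \<union> V) ` Pow (AS - V)" by blast
    qed
  qed (use assms in auto)
  have i: "inj_on (\<lambda>d. d \<union> V) (Pow (AS - V))" by (auto simp: inj_on_def)
  have "card {c. V \<subseteq> c \<and> c \<subseteq> AS} = card (Pow (AS - V))" unfolding e using card_image[OF i] .
  also have "\<dots> = 2 ^ card (AS - V)" using assms by (simp add: card_Pow)
  also have "card (AS - V) = card AS - card V" using assms by (meson card_Diff_subset finite_subset)
  finally show ?thesis .
qed

lemma comb:
  fixes col :: "nat \<Rightarrow> nat \<Rightarrow> nat set" and I :: "nat set"
  assumes fin: "finite I" and sub: "\<And>s k. col s k \<subseteq> {..<n}"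
    and mono: "\<And>s k j. s < T \<Longrightarrow> k \<in> I \<Longrightarrow> j \<in> I \<Longrightarrow> j \<noteq> k \<Longrightarrow> col s k \<subseteq> col (Suc s) j"
    and sT: "s \<le> T"
  shows "\<forall>V. V \<subseteq> {..<n} \<longrightarrow> card ((\<lambda>k. map (\<lambda>i. col i k) [s..<Suc T]) ` {k\<in>I. V \<subseteq> col s k}) \<le> 2^(n - card V)"
  using sT
proof (induction s rule: inc_induct)
  case base
  show ?case
  proof (intro allI impI)
    fix V :: "nat set" assume V: "V \<subseteq> {..<n}"
    have eq: "(\<lambda>k. map (\<lambda>i. col i k) [T..<Suc T]) ` {k\<in>I. V \<subseteq> col T k} = (\<lambda>c. [c]) ` (col T ` {k\<in>I. V \<subseteq> col T k})"
      by (simp add: image_image)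
    have "card ((\<lambda>c. [c]) ` (col T ` {k\<in>I. V \<subseteq> col T k})) \<le> card (col T ` {k\<in>I. V \<subseteq> col T k})"
      by (rule card_image_le) (simp add: fin)
    also have "\<dots> \<le> card {c. V \<subseteq> c \<and> c \<subseteq> {..<n}}"
      by (rule card_mono) (use sub in \<open>auto intro: finite_subset[of _ "Pow {..<n}"]\<close>)
    also have "\<dots> = 2^(n - card V)" using card_between[of "{..<n}" V] V by simp
    finally show "card ((\<lambda>k. map (\<lambda>i. col i k) [T..<Suc T]) ` {k\<in>I. V \<subseteq> col T k}) \<le> 2^(n - card V)"
      using eq by simp
  qed
next
  case (step s)
  define sig where "sig t k = map (\<lambda>i. col i k) [t..<Suc T]" for t k
  have sigS: "sig s k = col s k # sig (Suc s) k" for k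
    using step.hyps(2) by (simp add: sig_def upt_conv_Cons del: upt_Suc)
  have sigS1: "sig (Suc s) k = col (Suc s) k # sig (Suc (Suc s)) k" for k
    using step.hyps(2) by (simp add: sig_def upt_conv_Cons del: upt_Suc)
  show ?case
  proof (intro allI impI)
    fix V :: "nat set" assume V: "V \<subseteq> {..<n}"
    show "card ((\<lambda>k. map (\<lambda>i. col i k) [s..<Suc T]) ` {k\<in>I. V \<subseteq> col s k}) \<le> 2^(n - card V)"
    proof (cases "I = {}")
      case True then show ?thesis by simp
    next
      case False
      define mu where "mu = \<Inter> (col (Suc s) ` I)"
      from False obtain k0 where k0: "k0 \<in> I" by blast
      have mun: "mu \<subseteq> {..<n}" using sub[of "Suc s" k0] k0 unfolding mu_def by blast
      have finmu: "finite mu" using mun finite_subset by blast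
      have shared: "col s k \<subseteq> mu" if "k \<in> I" "k' \<in> I" "k \<noteq> k'" "col (Suc s) k = col (Suc s) k'" for k k'
        unfolding mu_def
      proof
        fix i assume i: "i \<in> col s k"
        show "i \<in> \<Inter> (col (Suc s) ` I)"
        proof (rule InterI)
          fix X assume "X \<in> col (Suc s) ` I"
          then obtain j where j: "j \<in> I" "X = col (Suc s) j" by blast
          show "i \<in> X"
          proof (cases "j = k")
            case True
            then show ?thesis using mono[OF step.hyps(2) that(1) that(2)] that i j by auto
          next
            case False
            then show ?thesis using mono[OF step.hyps(2) that(1) j(1)] i j by auto
          qed
        qed
      qed
      let ?S = "sig s ` {k\<in>I. V \<subseteq> col s k}"
      have "card ?S \<le> 2^(n - card V)"
      proof (cases "V \<subseteq> mu")
        case True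
        define phi where "phi \<sigma> = (if hd \<sigma> \<subseteq> mu then hd \<sigma> else V, tl \<sigma>)" for \<sigma> :: "nat set list"
        have inj: "inj_on phi ?S"
        proof (rule inj_onI)
          fix a b assume a: "a \<in> ?S" and b: "b \<in> ?S" and ab: "phi a = phi b"
          from a obtain k1 where k1: "k1 \<in> I" "a = sig s k1" by blast
          from b obtain k2 where k2: "k2 \<in> I" "b = sig s k2" by blast
          have tl: "sig (Suc s) k1 = sig (Suc s) k2" using ab k1 k2 by (simp add: phi_def sigS)
          then have c: "col (Suc s) k1 = col (Suc s) k2" by (simp add: sigS1)
          show "a = b"
          proof (cases "k1 = k2")
            case True then show ?thesis using k1 k2 by simp
          next
            case False
            have "col s k1 \<subseteq> mu" using shared[OF k1(1) k2(1) False c] .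
            moreover have "col s k2 \<subseteq> mu" using shared[OF k2(1) k1(1)] False c by auto
            ultimately have "col s k1 = col s k2" using ab k1 k2 by (simp add: phi_def sigS)
            then show ?thesis using k1 k2 tl by (simp add: sigS)
          qed
        qed
        have img: "phi ` ?S \<subseteq> {c. V \<subseteq> c \<and> c \<subseteq> mu} \<times> (sig (Suc s) ` {k\<in>I. mu \<subseteq> col (Suc s) k})"
        proof
          fix p assume "p \<in> phi ` ?S"
          then obtain k where k: "k \<in> I" "V \<subseteq> col s k" "p = phi (sig s k)" by blast
          have "mu \<subseteq> col (Suc s) k" using k unfolding mu_def by blast
          then show "p \<in> {c. V \<subseteq> c \<and> c \<subseteq> mu} \<times> (sig (Suc s) ` {k\<in>I. mu \<subseteq> col (Suc s) k})"
            using k True by (auto simp: phi_def sigS)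
        qed
        have IH: "card (sig (Suc s) ` {k\<in>I. mu \<subseteq> col (Suc s) k}) \<le> 2^(n - card mu)"
          using step.IH mun unfolding sig_def by blast
        have cVmu: "card V \<le> card mu" using True finmu by (simp add: card_mono)
        have cmun: "card mu \<le> n" using mun card_mono[of "{..<n}" mu] by simp
        have "card ?S = card (phi ` ?S)" using card_image[OF inj] by simp
        also have "\<dots> \<le> card ({c. V \<subseteq> c \<and> c \<subseteq> mu} \<times> (sig (Suc s) ` {k\<in>I. mu \<subseteq> col (Suc s) k}))"
          by (rule card_mono[OF _ img]) (use fin finmu in \<open>auto intro!: finite_cartesian_product intro: finite_subset[of _ "Pow mu"]\<close>)
        also have "\<dots> = card {c. V \<subseteq> c \<and> c \<subseteq> mu} * card (sig (Suc s) ` {k\<in>I. mu \<subseteq> col (Suc s) k})"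
          by (rule card_cartesian_product)
        also have "\<dots> \<le> 2^(card mu - card V) * 2^(n - card mu)"
          using card_between[OF finmu True] IH by simp
        also have "\<dots> = 2^(n - card V)" using cVmu cmun by (simp flip: power_add)
        finally show ?thesis .
      next
        case False
        have "card ?S \<le> Suc 0"
        proof (subst card_le_Suc0_iff_eq)
          show "finite ?S" using fin by simp
          show "\<forall>a\<in>?S. \<forall>b\<in>?S. a = b"
          proof (intro ballI)
            fix a b assume a: "a \<in> ?S" and b: "b \<in> ?S"
            from a obtain k1 where k1: "k1 \<in> I" "V \<subseteq> col s k1" "a = sig s k1" by blast
            from b obtain k2 where k2: "k2 \<in> I" "V \<subseteq> col s k2" "b = sig s k2" by blast
            have "k1 = k2"
            proof (rule ccontr)
              assume ne: "k1 \<noteq> k2"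
              have "V \<subseteq> mu" unfolding mu_def
              proof (rule Inter_greatest)
                fix X assume "X \<in> col (Suc s) ` I"
                then obtain j where j: "j \<in> I" "X = col (Suc s) j" by blast
                show "V \<subseteq> X"
                proof (cases "j = k1")
                  case True
                  then show ?thesis using mono[OF step.hyps(2) k2(1) j(1)] ne k2 j by auto
                next
                  case False
                  then show ?thesis using mono[OF step.hyps(2) k1(1) j(1)] k1 j by auto
                qed
              qed
              then show False using \<open>\<not> V \<subseteq> mu\<close> by simp
            qed
            then show "a = b" using k1 k2 by simp
          qed
        qed
        also have "\<dots> \<le> 2^(n - card V)" by simp
        finally show ?thesis .
      qed
      then show ?thesis unfolding sig_def .
    qed
  qed
qed



lemma prec_C: "prec n sq (C M k) z \<Longrightarrow> z \<in> Un_set n \<and> M \<ge> 1 \<and> ((\<exists>j. j\<noteq>k \<and> z = Ea (M-1) j) \<or> (\<exists>i. z = Eb (M-1) i))"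
  unfolding prec_def by simp

lemma prec_Ea: "prec n sq (Ea M k) z \<Longrightarrow> z \<in> Un_set n \<and> (z = A M \<or> (\<exists>j. j\<noteq>k \<and> z = D M j))"
  unfolding prec_def by simp

lemma prec_D: "prec n sq (D M k) z \<Longrightarrow> z \<in> Un_set n \<and> (\<exists>j. j\<noteq>k \<and> z = C M j)"
  unfolding prec_def by auto

lemma prec_CI: "C M k \<in> Un_set n \<Longrightarrow> z \<in> Un_set n \<Longrightarrow> M \<ge> 1 \<Longrightarrow> (\<exists>j. j\<noteq>k \<and> z = Ea (M-1) j) \<or> (\<exists>i. z = Eb (M-1) i) \<Longrightarrow> prec n sq (C M k) z"
  unfolding prec_def by simp

lemma prec_EaI: "Ea M k \<in> Un_set n \<Longrightarrow> z \<in> Un_set n \<Longrightarrow> z = A M \<or> (\<exists>j. j\<noteq>k \<and> z = D M j) \<Longrightarrow> prec n sq (Ea M k) z"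
  unfolding prec_def by simp

lemma prec_DI: "D M k \<in> Un_set n \<Longrightarrow> z \<in> Un_set n \<Longrightarrow> \<exists>j. j\<noteq>k \<and> z = C M j \<Longrightarrow> prec n sq (D M k) z"
  unfolding prec_def by auto



definition xs :: "nat \<Rightarrow> nat \<Rightarrow> nat \<Rightarrow> elt" where
  "xs m t k = (if t mod 3 = 0 then C (m - t div 3) k
               else if t mod 3 = 1 then Ea (m - t div 3 - 1) k else D (m - t div 3 - 1) k)"

lemma xs_Un: "k \<le> NN n \<Longrightarrow> xs m t k \<in> Un_set n"
  unfolding xs_def Un_set_def by auto

lemma xs_nBot: "xs m t k \<noteq> Bot"
  unfolding xs_def by auto

lemma xs0: "xs m 0 k = C m k" by (simp add: xs_def)

lemma xs_cases:
  obtains q where "t = 3*q" "\<And>l. xs m t l = C (m - q) l" "\<And>l. xs m (Suc t) l = Ea (m - q - 1) l"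
  | q where "t = 3*q+1" "\<And>l. xs m t l = Ea (m - q - 1) l" "\<And>l. xs m (Suc t) l = D (m - q - 1) l"
  | q where "t = 3*q+2" "\<And>l. xs m t l = D (m - q - 1) l" "\<And>l. xs m (Suc t) l = C (m - q - 1) l"
proof -
  have "t mod 3 = 0 \<or> t mod 3 = 1 \<or> t mod 3 = 2" by arith
  then show thesis
  proof (elim disjE)
    assume h: "t mod 3 = 0"
    then have "Suc t mod 3 = 1" "Suc t div 3 = t div 3" "t = 3 * (t div 3) + 0" by presburger+
    then show thesis using h that(1)[of "t div 3"] unfolding xs_def by auto
  next
    assume h: "t mod 3 = 1"
    then have "Suc t mod 3 = 2" "Suc t div 3 = t div 3" "t = 3 * (t div 3) + 1" by presburger+
    then show thesis using h that(2)[of "t div 3"] unfolding xs_def by auto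
  next
    assume h: "t mod 3 = 2"
    then have "Suc t mod 3 = 0" "Suc t div 3 = Suc (t div 3)" "t = 3 * (t div 3) + 2" by presburger+
    then show thesis using h that(3)[of "t div 3"] unfolding xs_def by auto
  qed
qed

lemma xs_prec:
  assumes "t < 3*m" "k \<le> NN n" "j \<le> NN n" "j \<noteq> k"
  shows "prec n sq (xs m t k) (xs m (Suc t) j)"
proof (cases rule: xs_cases[where t=t and m=m])
  case (1 q)
  then have "m - q \<ge> 1" using assms by simp
  then show ?thesis using 1 assms xs_Un[of k n m t] xs_Un[of j n m "Suc t"]
    by (auto intro!: prec_CI)
next
  case (2 q)
  then show ?thesis using assms xs_Un[of k n m t] xs_Un[of j n m "Suc t"]
    by (auto intro!: prec_EaI)
next
  case (3 q)
  then show ?thesis using assms xs_Un[of k n m t] xs_Un[of j n m "Suc t"]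
    by (auto intro!: prec_DI)
qed

lemma xs_cross:
  assumes "t \<le> 3*m" "k \<le> NN n" "l \<le> NN n" "prec n sq (xs m t k) z"
  shows "(t < 3*m \<and> z = xs m (Suc t) l) \<or> prec n sq (xs m t l) z"
proof (cases rule: xs_cases[where t=t and m=m])
  case (1 q)
  have xl: "xs m t l = C (m - q) l" using 1 by simp
  have u: "xs m t l \<in> Un_set n" using xs_Un assms(3) .
  from prec_C[OF assms(4)[unfolded 1(2)]]
  have z: "z \<in> Un_set n" and h0: "m - q \<ge> 1"
    and h: "(\<exists>j. j \<noteq> k \<and> z = Ea (m - q - 1) j) \<or> (\<exists>i. z = Eb (m - q - 1) i)" by auto
  show ?thesis
  proof (cases "z = Ea (m - q - 1) l")
    case True then show ?thesis using h0 1 by auto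
  next
    case False
    then have "(\<exists>j. j \<noteq> l \<and> z = Ea (m - q - 1) j) \<or> (\<exists>i. z = Eb (m - q - 1) i)" using h by auto
    then show ?thesis using prec_CI[OF u[unfolded xl] z h0] xl by simp
  qed
next
  case (2 q)
  have xl: "xs m t l = Ea (m - q - 1) l" using 2 by simp
  have u: "xs m t l \<in> Un_set n" using xs_Un assms(3) .
  have lt: "t < 3*m" using 2(1) assms(1) by presburger
  from prec_Ea[OF assms(4)[unfolded 2(2)]]
  have z: "z \<in> Un_set n" and h: "z = A (m - q - 1) \<or> (\<exists>j. j \<noteq> k \<and> z = D (m - q - 1) j)" by auto
  show ?thesis
  proof (cases "z = D (m - q - 1) l")
    case True then show ?thesis using lt 2 by auto
  next
    case False
    then have "z = A (m - q - 1) \<or> (\<exists>j. j \<noteq> l \<and> z = D (m - q - 1) j)" using h by auto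
    then show ?thesis using prec_EaI[OF u[unfolded xl] z] xl by simp
  qed
next
  case (3 q)
  have xl: "xs m t l = D (m - q - 1) l" using 3 by simp
  have u: "xs m t l \<in> Un_set n" using xs_Un assms(3) .
  have lt: "t < 3*m" using 3(1) assms(1) by presburger
  from prec_D[OF assms(4)[unfolded 3(2)]]
  have z: "z \<in> Un_set n" and h: "\<exists>j. j \<noteq> k \<and> z = C (m - q - 1) j" by auto
  show ?thesis
  proof (cases "z = C (m - q - 1) l")
    case True then show ?thesis using lt 3 by auto
  next
    case False
    then have "\<exists>j. j \<noteq> l \<and> z = C (m - q - 1) j" using h by auto
    then show ?thesis using prec_DI[OF u[unfolded xl] z] xl by simp
  qed
qed



lemma sub_opens_all:
  assumes "V \<subseteq> Z" "Z \<subseteq> abom_carrier n" "Bot \<notin> Z"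
  shows "V \<in> sub_opens (abom_opens n) Z"
proof -
  have "V \<in> abom_opens n" using assms unfolding abom_opens_def by auto
  moreover have "V = V \<inter> Z" using assms by auto
  ultimately show ?thesis unfolding sub_opens_def by blast
qed

lemma quot_clopen:
  assumes "U \<subseteq> Z // R" "Z \<subseteq> abom_carrier n" "Bot \<notin> Z" "R \<subseteq> Z \<times> Z"
  shows "clopen_in (Z // R) (quot_opens Z (sub_opens (abom_opens n) Z) R) U"
proof -
  have q: "\<Union> (Z // R) \<subseteq> Z" using assms(4) unfolding quotient_def by auto
  have "\<Union> U \<subseteq> Z" using assms(1) q by blast
  moreover have "\<Union> (Z // R - U) \<subseteq> Z" using q by blast
  ultimately show ?thesis using assms sub_opens_all
    unfolding clopen_in_def quot_opens_def by auto
qed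

theorem mainTheorem9:
  fixes n :: nat and s :: "nat \<Rightarrow> nat \<times> nat \<times> nat" and Z :: "elt set"
    and R :: "(elt \<times> elt) set"
  assumes "n \<ge> 2"
    and "enumeration n s"
    and "finite Z"
    and "E_subspace (abom_carrier n) (abom_opens n) (abom_le n s) Z"
    and "E_partition Z (sub_opens (abom_opens n) Z) (abom_le n s) R"
    and "colorable n (Z // R) (quot_opens Z (sub_opens (abom_opens n) Z) R) (quot_le (abom_le n s))"
  shows "\<forall>m. (\<forall>k \<le> NN n. C m k \<in> Z) \<longrightarrow> (\<exists>i j. i < j \<and> j \<le> NN n \<and> (C m i, C m j) \<in> R)"
proof (intro allI impI)
  fix m assume Cm: "\<forall>k \<le> NN n. C m k \<in> Z"
  define le where "le = abom_le n s"
  define N where "N = NN n"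
  define P where "P = {(u, v). prec n s u v}"
  define car where "car = abom_carrier n"
  define Op where "Op = sub_opens (abom_opens n) Z"
  from assms(6) obtain f where cf: "coloring n (Z // R) (quot_opens Z Op R) (quot_le le) f"
    unfolding colorable_def Op_def le_def by blast
  have eqR: "equiv Z R" and ER: "\<And>x y z. (x, y) \<in> R \<Longrightarrow> z \<in> Z \<Longrightarrow> le x z \<Longrightarrow> \<exists>w\<in>Z. le y w \<and> (z, w) \<in> R"
    using assms(5) unfolding E_partition_def le_def by blast+
  have RZ: "R \<subseteq> Z \<times> Z" using eqR unfolding equiv_def by blast
  have Rrefl: "x \<in> Z \<Longrightarrow> (x, x) \<in> R" for x using eqR unfolding equiv_def refl_on_def by blast
  have Zcar: "Z \<subseteq> car" and up: "\<And>x y. x \<in> Z \<Longrightarrow> y \<in> car \<Longrightarrow> le x y \<Longrightarrow> y \<in> Z"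
    using assms(4) unfolding E_subspace_def car_def le_def by blast+
  have leI: "x \<in> car \<Longrightarrow> y \<in> car \<Longrightarrow> (x, y) \<in> P\<^sup>* \<Longrightarrow> le x y" for x y
    unfolding le_def abom_le_def car_def P_def by blast
  have leD: "le x y \<Longrightarrow> x \<noteq> Bot \<Longrightarrow> (x, y) \<in> P\<^sup>*" for x y
    unfolding le_def abom_le_def P_def by blast
  have BotZ: "Bot \<notin> Z"
  proof
    assume "Bot \<in> Z"
    have "range A \<subseteq> Z"
    proof
      fix y assume "y \<in> range A"
      then have yc: "y \<in> car" unfolding car_def abom_carrier_def Un_set_def by blast
      have "Bot \<in> car" unfolding car_def abom_carrier_def by simp
      then have "le Bot y" using yc unfolding le_def abom_le_def car_def by simp
      then show "y \<in> Z" using up \<open>Bot \<in> Z\<close> yc by blast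
    qed
    moreover have "infinite (range A)" using finite_imageD[of A UNIV] by (auto simp: inj_def)
    ultimately show False using assms(3) finite_subset by blast
  qed
  have Un_car: "Un_set n \<subseteq> car" unfolding car_def abom_carrier_def by blast
  have N1: "1 \<le> N" unfolding N_def NN_def
  proof -
    have "(2::nat) ^ 1 \<le> 2 ^ (n + 1)" by (rule power_increasing) auto
    then have "(2::nat) \<le> 2 ^ (n + 1)" by simp
    then show "1 \<le> (2::nat) ^ (n + 1) - 1" by linarith
  qed
  have xsZ: "xs m t k \<in> Z" if "t \<le> 3*m" "k \<le> N" for t k
    using that
  proof (induction t arbitrary: k)
    case 0 then show ?case using Cm by (simp add: xs0 N_def)
  next
    case (Suc t)
    define j where "j = (if k = 0 then 1 else 0::nat)"
    have j: "j \<le> N" "j \<noteq> k" using N1 unfolding j_def by auto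
    have "xs m t j \<in> Z" using Suc.IH[of j] Suc.prems j by simp
    moreover have "prec n s (xs m t j) (xs m (Suc t) k)"
      using xs_prec[of t m j n k s] Suc.prems j unfolding N_def by simp
    moreover have "xs m (Suc t) k \<in> car" using xs_Un[of k n m "Suc t"] Suc.prems Un_car N_def by blast
    ultimately show ?case using up leI Zcar unfolding P_def by blast
  qed
  define F where "F x = f (R `` {x})" for x
  define col where "col t k = {i. i < n \<and> F (xs m t k) i}" for t k
  define T where "T = 3 * m"
  define sig where "sig t k = map (\<lambda>i. col i k) [t..<Suc T]" for t k
  define G where "G = {(xs m t k, xs m t l) | t k l. t \<le> T \<and> k \<le> N \<and> l \<le> N \<and> sig t k = sig t l}"
  define R' where "R' = (R \<union> G)\<^sup>+"
  have GZ: "G \<subseteq> Z \<times> Z" unfolding G_def T_def using xsZ by blast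
  have R'Z: "R' \<subseteq> Z \<times> Z" unfolding R'_def using RZ GZ by (simp add: trancl_subset_Sigma)
  have RR': "R \<subseteq> R'" unfolding R'_def by auto
  have GR': "G \<subseteq> R'" unfolding R'_def by auto
  have symG: "sym G" unfolding G_def sym_def by force
  have symR: "sym R" using eqR unfolding equiv_def by blast
  have symR': "sym R'" unfolding R'_def using symG symR by (simp add: sym_Un sym_trancl)
  have transR': "trans R'" unfolding R'_def by simp
  have R'refl: "x \<in> Z \<Longrightarrow> (x, x) \<in> R'" for x using Rrefl RR' by blast
  define good where "good x y \<longleftrightarrow> (\<forall>z. z \<in> Z \<and> le x z \<longrightarrow> (\<exists>w\<in>Z. le y w \<and> (z, w) \<in> R'))" for x y
  have goodR: "good x y" if "(x, y) \<in> R" for x y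
    unfolding good_def using ER[OF that] RR' by blast
  have sigS: "sig t k = col t k # sig (Suc t) k" if "t \<le> T" for t k
    using that by (simp add: sig_def upt_conv_Cons del: upt_Suc)
  define Q where "Q t \<longleftrightarrow> (\<forall>k l. k \<le> N \<longrightarrow> l \<le> N \<longrightarrow> sig t k = sig t l \<longrightarrow> good (xs m t k) (xs m t l))" for t
  have xsZ': "xs m t k \<in> Z" if "t \<le> T" "k \<le> N" for t k using xsZ that T_def by simp
  have step_gen: "Q t" if tT: "t \<le> T" and IH: "t < T \<Longrightarrow> Q (Suc t)" for t
    unfolding Q_def
  proof (intro allI impI)
    fix k l assume k: "k \<le> N" and l: "l \<le> N" and sg: "sig t k = sig t l"
    have xkZ: "xs m t k \<in> Z" and xlZ: "xs m t l \<in> Z" using xsZ' tT k l by auto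
    show "good (xs m t k) (xs m t l)" unfolding good_def
    proof (intro allI impI)
      fix z assume z: "z \<in> Z \<and> le (xs m t k) z"
      have zc: "z \<in> car" using z Zcar by blast
      have "(xs m t k, z) \<in> P\<^sup>*" using leD z xs_nBot by blast
      then show "\<exists>w\<in>Z. le (xs m t l) w \<and> (z, w) \<in> R'"
      proof (rule converse_rtranclE)
        assume "xs m t k = z"
        moreover have "le (xs m t l) (xs m t l)" using leI xlZ Zcar by blast
        moreover have "(xs m t k, xs m t l) \<in> G" unfolding G_def using tT k l sg by blast
        ultimately show ?thesis using xlZ GR' by blast
      next
        fix y assume py: "(xs m t k, y) \<in> P" and yz: "(y, z) \<in> P\<^sup>*"
        have "(t < 3*m \<and> y = xs m (Suc t) l) \<or> prec n s (xs m t l) y"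
          using xs_cross[of t m k n l s y] tT k l py unfolding T_def N_def P_def by simp
        then show ?thesis
        proof (elim disjE conjE)
          assume tm: "t < 3*m" and y: "y = xs m (Suc t) l"
          show ?thesis
          proof (cases "k = l")
            case True then show ?thesis using z R'refl by blast
          next
            case False
            have sg1: "sig (Suc t) l = sig (Suc t) k" using sg sigS[OF tT] by simp
            have QS: "Q (Suc t)" using IH tm T_def by simp
            have g: "good (xs m (Suc t) l) (xs m (Suc t) k)" using QS k l sg1 unfolding Q_def by blast
            have yZ: "xs m (Suc t) l \<in> Z" using xsZ' tm l T_def by simp
            have "le (xs m (Suc t) l) z" using leI yZ Zcar zc yz y by blast
            then obtain w where w: "w \<in> Z" "le (xs m (Suc t) k) w" "(z, w) \<in> R'"
              using g z unfolding good_def by blast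
            have "(xs m (Suc t) k, w) \<in> P\<^sup>*" using leD w(2) xs_nBot by blast
            moreover have "(xs m t l, xs m (Suc t) k) \<in> P"
              using xs_prec[of t m l n k s] tm k l False unfolding P_def N_def by simp
            ultimately have "(xs m t l, w) \<in> P\<^sup>*" by (rule converse_rtrancl_into_rtrancl[rotated])
            then have "le (xs m t l) w" using leI xlZ w(1) Zcar by blast
            then show ?thesis using w by blast
          qed
        next
          assume "prec n s (xs m t l) y"
          then have "(xs m t l, z) \<in> P\<^sup>*" using yz unfolding P_def
            by (simp add: converse_rtrancl_into_rtrancl)
          then have "le (xs m t l) z" using leI xlZ zc Zcar by blast
          then show ?thesis using z R'refl by blast
        qed
      qed
    qed
  qed
  have goodG: "Q t" if "t \<le> T" for t
    using that
  proof (induction t rule: inc_induct)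
    case base
    show ?case using step_gen by simp
  next
    case (step t)
    show ?case using step_gen step by simp
  qed
  have good_trans: "good x y'" if g1: "good x y" and g2: "good y y'" for x y y'
    unfolding good_def
  proof (intro allI impI)
    fix z assume z: "z \<in> Z \<and> le x z"
    obtain w where w: "w \<in> Z" "le y w" "(z, w) \<in> R'" using g1 z unfolding good_def by blast
    obtain w' where w': "w' \<in> Z" "le y' w'" "(w, w') \<in> R'" using g2 w unfolding good_def by blast
    have "(z, w') \<in> R'" using transR' w(3) w'(3) unfolding trans_def by blast
    then show "\<exists>w\<in>Z. le y' w \<and> (z, w) \<in> R'" using w' by blast
  qed
  have goodRG: "good x y" if "(x, y) \<in> R \<union> G" for x y
  proof (cases "(x, y) \<in> R")
    case True then show ?thesis using goodR by blast
  next
    case False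
    then have "(x, y) \<in> G" using that by blast
    then obtain t k l where "x = xs m t k" "y = xs m t l" "t \<le> T" "k \<le> N" "l \<le> N" "sig t k = sig t l"
      unfolding G_def by blast
    then show ?thesis using goodG unfolding Q_def by blast
  qed
  have goodR': "good x y" if "(x, y) \<in> R'" for x y
    using that unfolding R'_def
  proof (induction rule: trancl_induct)
    case (base y) then show ?case using goodRG by blast
  next
    case (step y z) then show ?case using goodRG good_trans by blast
  qed
  have colRG: "same_color n (F x) (F y)" if "(x, y) \<in> R \<union> G" for x y
  proof (cases "(x, y) \<in> R")
    case True
    then have "R `` {x} = R `` {y}" using equiv_class_eq[OF eqR] by blast
    then show ?thesis unfolding F_def same_color_def by simp
  next
    case False
    then have "(x, y) \<in> G" using that by blast
    then obtain t k l where h: "x = xs m t k" "y = xs m t l" "t \<le> T" "sig t k = sig t l"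
      unfolding G_def by blast
    then have "col t k = col t l" using sigS by simp
    then have "{i. i < n \<and> F x i} = {i. i < n \<and> F y i}" using h unfolding col_def by simp
    then show ?thesis unfolding same_color_def by (auto simp: set_eq_iff)
  qed
  have colR': "same_color n (F x) (F y)" if "(x, y) \<in> R'" for x y
    using that unfolding R'_def
  proof (induction rule: trancl_induct)
    case (base y) then show ?case using colRG by blast
  next
    case (step y z) then show ?case using colRG[of y z] unfolding same_color_def by auto
  qed
  define RQ where "RQ = {(R `` {x}, R `` {y}) | x y. (x, y) \<in> R'}"
  have RQD: "\<exists>x y. X = R `` {x} \<and> Y = R `` {y} \<and> (x, y) \<in> R'" if "(X, Y) \<in> RQ" for X Y
    using that unfolding RQ_def by blast
  have RQI: "(R `` {x}, R `` {y}) \<in> RQ" if "(x, y) \<in> R'" for x y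
    using that unfolding RQ_def by blast
  have eqRQ: "equiv (Z // R) RQ"
  proof (rule equivI)
    show "RQ \<subseteq> Z // R \<times> Z // R"
    proof
      fix p assume "p \<in> RQ"
      then obtain x y where h: "p = (R `` {x}, R `` {y})" "(x, y) \<in> R'" unfolding RQ_def by blast
      have "x \<in> Z" "y \<in> Z" using h(2) R'Z by blast+
      then have "R `` {x} \<in> Z // R" "R `` {y} \<in> Z // R" by (simp_all add: quotientI)
      then show "p \<in> Z // R \<times> Z // R" using h(1) by simp
    qed
    show "refl_on (Z // R) RQ" unfolding refl_on_def
    proof
      fix X assume "X \<in> Z // R"
      then obtain x where "X = R `` {x}" "x \<in> Z" by (rule quotientE)
      then show "(X, X) \<in> RQ" using RQI R'refl by blast
    qed
    show "sym RQ" unfolding sym_def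
    proof (intro allI impI)
      fix X Y assume "(X, Y) \<in> RQ"
      then obtain x y where "X = R `` {x}" "Y = R `` {y}" "(x, y) \<in> R'" using RQD by blast
      then show "(Y, X) \<in> RQ" using RQI symR' unfolding sym_def by blast
    qed
    show "trans RQ" unfolding trans_def
    proof (intro allI impI)
      fix X Y W assume XY: "(X, Y) \<in> RQ" and YW: "(Y, W) \<in> RQ"
      obtain x y where h1: "X = R `` {x}" "Y = R `` {y}" "(x, y) \<in> R'" using RQD[OF XY] by blast
      obtain y' w where h2: "Y = R `` {y'}" "W = R `` {w}" "(y', w) \<in> R'" using RQD[OF YW] by blast
      have yZ: "y \<in> Z" using h1(3) R'Z by blast
      have y'Z: "y' \<in> Z" using h2(3) R'Z by blast
      have "R `` {y} = R `` {y'}" using h1(2) h2(1) by simp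
      then have "(y, y') \<in> R" using eq_equiv_class_iff[OF eqR yZ y'Z] by simp
      then have "(y, y') \<in> R'" using RR' by blast
      then have "(x, y') \<in> R'" using transD[OF transR' h1(3)] by blast
      then have "(x, w) \<in> R'" using transD[OF transR' _ h2(3)] by blast
      then show "(X, W) \<in> RQ" using h1(1) h2(2) RQI by simp
    qed
  qed
  have RQ_E: "E_partition (Z // R) (quot_opens Z Op R) (quot_le le) RQ"
    unfolding E_partition_def
  proof (intro conjI)
    show "equiv (Z // R) RQ" by (rule eqRQ)
    show "\<forall>X Y Z0. (X, Y) \<in> RQ \<and> Z0 \<in> Z // R \<and> quot_le le X Z0 \<longrightarrow>
        (\<exists>W\<in>Z // R. quot_le le Y W \<and> (Z0, W) \<in> RQ)"
    proof (intro allI impI, elim conjE)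
      fix X Y Z0 assume XY: "(X, Y) \<in> RQ" and Z0: "Z0 \<in> Z // R" and ql: "quot_le le X Z0"
      obtain x y where h: "X = R `` {x}" "Y = R `` {y}" "(x, y) \<in> R'" using RQD XY by blast
      obtain p z where pz: "p \<in> X" "z \<in> Z0" "le p z" using ql unfolding quot_le_def by blast
      obtain z0 where z0: "Z0 = R `` {z0}" "z0 \<in> Z" using Z0 by (rule quotientE)
      have "(z0, z) \<in> R" using pz z0 by simp
      then have zZ: "z \<in> Z" and Z0z: "Z0 = R `` {z}" using RZ z0 equiv_class_eq[OF eqR] by auto
      have "(x, p) \<in> R" using pz h by simp
      then have "(p, x) \<in> R'" using symR RR' unfolding sym_def by blast
      then have "(p, y) \<in> R'" using h transR' unfolding trans_def by blast
      then obtain w where w: "w \<in> Z" "le y w" "(z, w) \<in> R'" using goodR' zZ pz unfolding good_def by blast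
      have yZ: "y \<in> Z" using h R'Z by auto
      have "quot_le le Y (R `` {w})" unfolding quot_le_def using h Rrefl yZ w by blast
      moreover have "(Z0, R `` {w}) \<in> RQ" using Z0z w RQI by blast
      moreover have "R `` {w} \<in> Z // R" using w(1) by (rule quotientI)
      ultimately show "\<exists>W\<in>Z // R. quot_le le Y W \<and> (Z0, W) \<in> RQ" by blast
    qed
    show "\<forall>X\<in>Z // R. \<forall>Y\<in>Z // R. (X, Y) \<notin> RQ \<longrightarrow>
       (\<exists>U. clopen_in (Z // R) (quot_opens Z Op R) U \<and> (\<forall>u\<in>U. \<forall>v. (u, v) \<in> RQ \<longrightarrow> v \<in> U) \<and> X \<in> U \<and> Y \<notin> U)"
    proof (intro ballI impI)
      fix X Y assume X: "X \<in> Z // R" and Y: "Y \<in> Z // R" and nXY: "(X, Y) \<notin> RQ"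
      have sub: "RQ `` {X} \<subseteq> Z // R" using eqRQ unfolding equiv_def by blast
      have "clopen_in (Z // R) (quot_opens Z Op R) (RQ `` {X})"
        unfolding Op_def by (rule quot_clopen[OF sub _ BotZ RZ]) (use Zcar car_def in simp)
      moreover have "\<forall>u\<in>RQ `` {X}. \<forall>v. (u, v) \<in> RQ \<longrightarrow> v \<in> RQ `` {X}"
        using eqRQ unfolding equiv_def trans_def by blast
      moreover have "X \<in> RQ `` {X}" using eqRQ X unfolding equiv_def refl_on_def by blast
      moreover have "Y \<notin> RQ `` {X}" using nXY by blast
      ultimately show "\<exists>U. clopen_in (Z // R) (quot_opens Z Op R) U \<and> (\<forall>u\<in>U. \<forall>v. (u, v) \<in> RQ \<longrightarrow> v \<in> U) \<and> X \<in> U \<and> Y \<notin> U"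
        by blast
    qed
  qed
  have RQId: "RQ = Id_on (Z // R)"
  proof (rule ccontr)
    assume "RQ \<noteq> Id_on (Z // R)"
    then obtain X Y where XY: "(X, Y) \<in> RQ" and nc: "\<not> same_color n (f X) (f Y)"
      using cf RQ_E unfolding coloring_def by blast
    obtain x y where h: "X = R `` {x}" "Y = R `` {y}" "(x, y) \<in> R'" using RQD XY by blast
    show False using colR'[OF h(3)] nc h unfolding F_def by simp
  qed
  have GR: "(x, y) \<in> R" if "(x, y) \<in> G" for x y
  proof -
    have "(R `` {x}, R `` {y}) \<in> RQ" using that GR' RQI by blast
    then have "R `` {x} = R `` {y}" using RQId by (simp add: Id_on_def)
    moreover have "x \<in> Z" "y \<in> Z" using that GZ by auto
    ultimately show ?thesis using eq_equiv_class_iff[OF eqR] by blast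
  qed
  have wc: "\<forall>X\<in>Z // R. \<forall>Y\<in>Z // R. quot_le le X Y \<longrightarrow> (\<forall>i<n. f X i \<longrightarrow> f Y i)"
    using cf unfolding coloring_def weak_coloring_def by blast
  have colsub: "col t k \<subseteq> {..<n}" for t k unfolding col_def by auto
  have colmono: "col t k \<subseteq> col (Suc t) j" if "t < T" "k \<in> {..N}" "j \<in> {..N}" "j \<noteq> k" for t k j
  proof -
    have a: "xs m t k \<in> Z" "xs m (Suc t) j \<in> Z" using xsZ' that by auto
    have "(xs m t k, xs m (Suc t) j) \<in> P"
      using xs_prec[of t m k n j s] that unfolding P_def N_def T_def by simp
    then have "le (xs m t k) (xs m (Suc t) j)" using leI a Zcar by blast
    then have "quot_le le (R `` {xs m t k}) (R `` {xs m (Suc t) j})"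
      unfolding quot_le_def using a Rrefl by blast
    then have "\<forall>i<n. F (xs m t k) i \<longrightarrow> F (xs m (Suc t) j) i"
      using wc a quotientI[of _ Z R] unfolding F_def by blast
    then show ?thesis unfolding col_def by auto
  qed
  have GI: "(xs m t k, xs m t l) \<in> G" if "t \<le> T" "k \<le> N" "l \<le> N" "sig t k = sig t l" for t k l
    unfolding G_def using that by blast
  have cc: "\<forall>V. V \<subseteq> {..<n} \<longrightarrow> card ((\<lambda>k. map (\<lambda>i. col i k) [0..<Suc T]) ` {k\<in>{..N}. V \<subseteq> col 0 k}) \<le> 2^(n - card V)"
    by (rule comb[of "{..N}" col n T 0]) (simp_all add: colsub colmono)
  have sig0: "sig 0 = (\<lambda>k. map (\<lambda>i. col i k) [0..<Suc T])" by (simp add: sig_def fun_eq_iff)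
  have "card (sig 0 ` {k\<in>{..N}. {} \<subseteq> col 0 k}) \<le> 2^(n - card ({}::nat set))"
    using spec[OF cc, of "{}"] sig0 by simp
  moreover have "{k\<in>{..N}. {} \<subseteq> col 0 k} = {..N}" by auto
  ultimately have cnt': "card (sig 0 ` {..N}) \<le> 2 ^ n" by simp
  have cN: "card {..N} = 2 ^ (n + 1)" unfolding N_def NN_def by simp
  have lt: "(2::nat) ^ n < 2 ^ (n + 1)" by simp
  have "\<not> inj_on (sig 0) {..N}"
  proof
    assume "inj_on (sig 0) {..N}"
    then have "card (sig 0 ` {..N}) = card {..N}" by (rule card_image)
    then show False using cnt' cN lt by simp
  qed
  then obtain k l where kl: "k \<le> N" "l \<le> N" "k \<noteq> l" "sig 0 k = sig 0 l"
    unfolding inj_on_def by auto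
  have "(xs m 0 k, xs m 0 l) \<in> G" using GI kl by simp
  moreover have "(xs m 0 l, xs m 0 k) \<in> G" using GI kl by simp
  ultimately have r: "(C m k, C m l) \<in> R" "(C m l, C m k) \<in> R" using GR by (simp_all add: xs0)
  show "\<exists>i j. i < j \<and> j \<le> NN n \<and> (C m i, C m j) \<in> R"
  proof (cases "k < l")
    case True then show ?thesis using r kl N_def by blast
  next
    case False then have "l < k" using kl by simp
    then show ?thesis using r kl N_def by blast
  qed
qed

end
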